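(* Let $\mathcal{P}$ be a topological property that is clopen hereditary (i.e., every subspace that is both open and closed in a space with $\mathcal{P}$ has $\mathcal{P}$). If a topological space $X$ is dense-$\mathcal{P}$, then every open subspace of $X$ is dense-$\mathcal{P}$.
   Context: For a topological property $\mathcal{P}$, a space $X$ is called dense-$\mathcal{P}$ if every dense subset of $X$ (with the subspace topology) has $\mathcal{P}$. No separation axioms are assumed. *)

theory Defs
  imports "HOL-Analysis.Analysis"
begin

definition topological_property :: "('a topology \<Rightarrow> bool) \<Rightarrow> bool" where
  "topological_property P \<longleftrightarrow>
     (\<forall>X Y. P X \<and> X homeomorphic_space Y \<longrightarrow> P Y)"

definition clopen_hereditary :: "('a topology \<Rightarrow> bool) \<Rightarrow> bool" where
  "clopen_hereditary P \<longleftrightarrow>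
     (\<forall>X S. P X \<and> openin X S \<and> closedin X S \<longrightarrow> P (subtopology X S))"

definition dense_P :: "('a topology \<Rightarrow> bool) \<Rightarrow> 'a topology \<Rightarrow> bool" where
  "dense_P P X \<longleftrightarrow>
     (\<forall>D. D \<subseteq> topspace X \<and> X closure_of D = topspace X \<longrightarrow> P (subtopology X D))"

end

theory Submission
  imports Defs
begin

theorem mainTheorem2:
  fixes P :: "'a topology \<Rightarrow> bool" and X :: "'a topology"
  assumes "topological_property P"
    and "clopen_hereditary P"
    and "dense_P P X"
  shows "\<forall>U. openin X U \<longrightarrow> dense_P P (subtopology X U)"
proof (intro allI impI)
  fix U assume U: "openin X U"
  have UX: "U \<subseteq> topspace X" using U openin_subset by blast
  show "dense_P P (subtopology X U)"
    unfolding dense_P_def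
  proof (intro allI impI)
    fix D assume D: "D \<subseteq> topspace (subtopology X U) \<and> subtopology X U closure_of D = topspace (subtopology X U)"
    have DU: "D \<subseteq> U" using D UX by auto
    have cD: "U \<inter> X closure_of D = U"
    proof -
      have "subtopology X U closure_of D = U \<inter> X closure_of D"
        using closure_of_subtopology_open U by blast
      moreover have "topspace (subtopology X U) = U" using UX by auto
      ultimately show ?thesis using D by simp
    qed
    have "X closure_of U \<subseteq> X closure_of D"
      using cD by (metis closure_of_minimal closedin_closure_of inf.cobounded2)
    define E where "E = D \<union> (topspace X - X closure_of U)"
    have EX: "E \<subseteq> topspace X" using DU UX E_def by auto
    have "X closure_of E = topspace X"
    proof
      show "X closure_of E \<subseteq> topspace X" by (rule closure_of_subset_topspace)
      have "X closure_of D \<subseteq> X closure_of E" by (simp add: E_def closure_of_mono)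
      moreover have "topspace X - X closure_of U \<subseteq> X closure_of E"
      proof -
        have "topspace X - X closure_of U \<subseteq> E" unfolding E_def by blast
        thus ?thesis using closure_of_subset[OF EX] by blast
      qed
      ultimately show "topspace X \<subseteq> X closure_of E"
        using \<open>X closure_of U \<subseteq> X closure_of D\<close> by blast
    qed
    hence PE: "P (subtopology X E)" using assms(3) EX unfolding dense_P_def by blast
    have DE1: "D = E \<inter> U" using DU E_def closure_of_subset[OF UX] by auto
    have DE2: "D = E \<inter> X closure_of U" using DU E_def closure_of_subset[OF UX] by auto
    have op: "openin (subtopology X E) D"
      using DE1 U by (metis inf_commute openin_subtopology_Int2)
    have cl: "closedin (subtopology X E) D"
      using DE2 by (metis closedin_closure_of closedin_subtopology inf_commute)
    have "P (subtopology (subtopology X E) D)"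
      using assms(2) PE op cl unfolding clopen_hereditary_def by blast
    moreover have "subtopology (subtopology X E) D = subtopology (subtopology X U) D"
      using DE1 DU by (simp add: subtopology_subtopology Int_absorb1 inf_commute)
    ultimately show "P (subtopology (subtopology X U) D)" by simp
  qed
qed

end
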